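(* Let $X$ be a Tychonoff locally Menger $p$-space, and let $Y=bX\setminus X$ be a remainder of $X$ in some compactification $bX$. If $Y$ is homogeneous, then $Y$ is an $s$-space.
   Context: A space $X$ is Menger if for each sequence $(\mathcal{U}_n)$ of open covers of $X$ there is a sequence $(\mathcal{V}_n)$ with each $\mathcal{V}_n$ a finite subset of $\mathcal{U}_n$ and $\bigcup_{n}\bigcup\mathcal{V}_n=X$. A space $X$ is locally Menger if for each $x\in X$ there exist an open set $U$ and a Menger subspace $Y$ of $X$ with $x\in U\subseteq Y$. A Tychonoff space $X$ is a $p$-space if in some (equivalently, any) compactification $bX$ there is a countable family $\{\mathcal{U}_n:n\in\mathbb{N}\}$, each $\mathcal{U}_n$ a collection of open subsets of $bX$, such that for each $x\in X$, $x\in\bigcap_{n}\bigcup\{U\in\mathcal{U}_n:x\in U\}\subseteq X$. For a family $\mathcal{C}$ of subsets of $Z$, $\mathcal{C}_\delta$ is the family of intersections of nonempty subfamilies of $\mathcal{C}$ and $\mathcal{C}_{\delta,\sigma}$ the family of unions of subfamilies of $\mathcal{C}_\delta$; $\mathcal{C}$ is a source for $Y\subseteq Z$ if $Y\in\mathcal{C}_{\delta,\sigma}$. A Tychonoff space $X$ is an $s$-space if there is a countable source for $X$ in some (equivalently, any) compactification $bX$ consisting of open subsets of $bX$. A space $Y$ is homogeneous if for any $x,y\in Y$ there is a homeomorphism $h:Y\to Y$ with $h(x)=y$. *)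

theory Defs
  imports "HOL-Analysis.Analysis"
begin

definition tychonoff_space :: "'a topology \<Rightarrow> bool" where
  "tychonoff_space X \<longleftrightarrow> completely_regular_space X \<and> Hausdorff_space X"

definition menger_space :: "'a topology \<Rightarrow> bool" where
  "menger_space X \<longleftrightarrow>
     (\<forall>\<U> :: nat \<Rightarrow> 'a set set.
        (\<forall>n. (\<forall>U\<in>\<U> n. openin X U) \<and> topspace X \<subseteq> \<Union>(\<U> n)) \<longrightarrow>
        (\<exists>\<V> :: nat \<Rightarrow> 'a set set.
           (\<forall>n. finite (\<V> n) \<and> \<V> n \<subseteq> \<U> n) \<and>
           topspace X \<subseteq> (\<Union>n. \<Union>(\<V> n))))"

definition locally_menger :: "'a topology \<Rightarrow> bool" where
  "locally_menger X \<longleftrightarrow>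
     (\<forall>x\<in>topspace X. \<exists>U Y. openin X U \<and> Y \<subseteq> topspace X \<and>
         menger_space (subtopology X Y) \<and> x \<in> U \<and> U \<subseteq> Y)"

text \<open>bX is a compactification of the subspace X of it
  (X is identified with its homeomorphic copy inside bX).\<close>
definition compactification_of :: "'a topology \<Rightarrow> 'a set \<Rightarrow> bool" where
  "compactification_of bX X \<longleftrightarrow>
     compact_space bX \<and> Hausdorff_space bX \<and> X \<subseteq> topspace bX \<and>
     bX closure_of X = topspace bX"

definition p_space_in :: "'a topology \<Rightarrow> 'a set \<Rightarrow> bool" where
  "p_space_in bX X \<longleftrightarrow>
     (\<exists>\<U> :: nat \<Rightarrow> 'a set set.
        (\<forall>n. \<forall>U\<in>\<U> n. openin bX U) \<and>
        (\<forall>x\<in>X. x \<in> (\<Inter>n. \<Union>{U\<in>\<U> n. x \<in> U}) \<and>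
                 (\<Inter>n. \<Union>{U\<in>\<U> n. x \<in> U}) \<subseteq> X))"

definition delta_family :: "'a set set \<Rightarrow> 'a set set" where
  "delta_family C = {\<Inter>F | F. F \<subseteq> C \<and> F \<noteq> {}}"

definition delta_sigma_family :: "'a set set \<Rightarrow> 'a set set" where
  "delta_sigma_family C = {\<Union>G | G. G \<subseteq> delta_family C}"

definition is_source :: "'a set set \<Rightarrow> 'a set \<Rightarrow> bool" where
  "is_source C Y \<longleftrightarrow> Y \<in> delta_sigma_family C"

definition s_space_in :: "'a topology \<Rightarrow> 'a set \<Rightarrow> bool" where
  "s_space_in bY Y \<longleftrightarrow>
     (\<exists>C. countable C \<and> (\<forall>c\<in>C. openin bY c) \<and> is_source C Y)"

definition homogeneous_space :: "'a topology \<Rightarrow> bool" where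
  "homogeneous_space Y \<longleftrightarrow>
     (\<forall>x\<in>topspace Y. \<forall>y\<in>topspace Y. \<exists>h. homeomorphic_map Y Y h \<and> h x = y)"

end

theory Submission
  imports Defs
begin

definition sg :: "'a topology \<Rightarrow> 'a set \<Rightarrow> 'a \<Rightarrow> bool" where
  "sg bX X z \<longleftrightarrow> (\<exists>W D. openin bX W \<and> z \<in> W \<and> countable D \<and> (\<forall>d\<in>D. openin bX d) \<and>
     (\<forall>x\<in>X \<inter> bX closure_of (topspace bX - X) \<inter> W. \<forall>y\<in>topspace bX - X. \<exists>d\<in>D. y \<in> d \<and>
        x \<notin> bX closure_of (d \<inter> bX closure_of (topspace bX - X))))"

lemma menger_countable_subcover:
  assumes "menger_space S" "\<forall>U\<in>A. openin S U" "topspace S \<subseteq> \<Union>A"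
  shows "\<exists>A'. countable A' \<and> A' \<subseteq> A \<and> topspace S \<subseteq> \<Union>A'"
proof -
  from assms obtain V :: "nat \<Rightarrow> 'a set set" where V: "\<forall>n. finite (V n) \<and> V n \<subseteq> A"
    "topspace S \<subseteq> (\<Union>n. \<Union>(V n))"
    unfolding menger_space_def by (drule_tac x="\<lambda>n. A" in spec) auto
  show ?thesis
  proof (intro exI conjI)
    have "countable (V n)" for n using V countable_finite by blast
    then show "countable (\<Union>n. V n)" by (intro countable_UN) auto
    show "(\<Union>n. V n) \<subseteq> A" using V by auto
    show "topspace S \<subseteq> \<Union>(\<Union>n. V n)" using V(2) by blast
  qed
qed

lemma reg_nbhd:
  assumes "compact_space bX" "Hausdorff_space bX" "openin bX Op" "x \<in> Op"
  shows "\<exists>W. openin bX W \<and> x \<in> W \<and> bX closure_of W \<subseteq> Op"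
proof -
  have r: "regular_space bX" using assms compact_Hausdorff_imp_regular_space by blast
  have "closedin bX (topspace bX - Op)" using closedin_diff[OF closedin_topspace assms(3)] .
  moreover have "x \<in> topspace bX - (topspace bX - Op)" using assms(4) openin_subset[OF assms(3)] by blast
  ultimately obtain U where "openin bX U" "x \<in> U" "disjnt (topspace bX - Op) (bX closure_of U)"
    using r unfolding regular_space by blast
  then show ?thesis using closure_of_subset_topspace[of bX U]
    by (intro exI[of _ U]) (auto simp: disjnt_def)
qed

lemma sg_X:
  assumes cs: "compact_space bX" and hs: "Hausdorff_space bX" and XT: "X \<subseteq> topspace bX"
    and lm: "locally_menger (subtopology bX X)" and ps: "p_space_in bX X" and x0: "x0 \<in> X"
  shows "sg bX X x0"
proof -
  let ?T = "topspace bX"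
  let ?Z = "bX closure_of (topspace bX - X)"
  note reg = reg_nbhd[OF cs hs]
  have x0t: "x0 \<in> topspace (subtopology bX X)" using x0 XT by auto
  obtain U M where U: "openin (subtopology bX X) U" and M0: "M \<subseteq> topspace (subtopology bX X)"
    "menger_space (subtopology (subtopology bX X) M)" "x0\<in>U" "U\<subseteq>M"
    using lm[unfolded locally_menger_def, rule_format, OF x0t] by blast
  have MX: "M \<subseteq> X" using M0(1) by simp
  then have XM: "X \<inter> M = M" by blast
  have M: "M \<subseteq> X" "menger_space (subtopology bX M)" "x0\<in>U" "U\<subseteq>M"
    using MX M0(2-4) by (simp_all only: subtopology_subtopology XM)
  obtain Op where Op: "openin bX Op" "U = Op \<inter> X" using U[unfolded openin_subtopology] by metis
  have "x0 \<in> Op" using Op(2) M(3) by simp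
  then obtain W0 where W0: "openin bX W0" "x0 \<in> W0" "bX closure_of W0 \<subseteq> Op"
    using reg[OF Op(1)] by blast
  define L where "L = X \<inter> bX closure_of W0"
  have LM: "L \<subseteq> M" using W0(3) M(4)[unfolded Op(2)] unfolding L_def by blast
  obtain \<U> :: "nat \<Rightarrow> 'a set set" where opn: "\<forall>n. \<forall>U\<in>\<U> n. openin bX U"
    and pp: "\<forall>x\<in>X. x \<in> (\<Inter>n. \<Union>{U\<in>\<U> n. x\<in>U}) \<and> (\<Inter>n. \<Union>{U\<in>\<U> n. x\<in>U}) \<subseteq> X"
    using ps unfolding p_space_in_def by blast
  define \<V> where "\<V> n = {V. openin bX V \<and> (\<exists>U\<in>\<U> n. bX closure_of V \<subseteq> U)}" for n
  have "\<forall>n. \<exists>\<V>'. countable \<V>' \<and> \<V>' \<subseteq> \<V> n \<and> L \<subseteq> \<Union>\<V>'"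
  proof
    fix n
    let ?A = "(\<lambda>V. V \<inter> M) ` \<V> n \<union> {M - bX closure_of W0}"
    have MT: "M \<subseteq> ?T" using M XT by blast
    have opA: "\<forall>A\<in>?A. openin (subtopology bX M) A"
    proof
      fix A assume "A \<in> ?A"
      then show "openin (subtopology bX M) A"
      proof
        assume "A \<in> (\<lambda>V. V \<inter> M) ` \<V> n"
        then obtain V where "V \<in> \<V> n" "A = V \<inter> M" by blast
        then have "openin bX V" unfolding \<V>_def by blast
        then show ?thesis using \<open>A = V \<inter> M\<close> openin_subtopology_Int by metis
      next
        assume "A \<in> {M - bX closure_of W0}"
        then have "A = (?T - bX closure_of W0) \<inter> M" using MT by auto
        then show ?thesis by (metis openin_subtopology_Int openin_diff openin_topspace closedin_closure_of)
      qed
    qed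
    moreover have cvA: "topspace (subtopology bX M) \<subseteq> \<Union>?A"
    proof
      fix m assume m: "m \<in> topspace (subtopology bX M)"
      show "m \<in> \<Union>?A"
      proof (cases "m \<in> bX closure_of W0")
        case True
        then have "m \<in> X" using m M by auto
        then have "m \<in> (\<Inter>n. \<Union>{U\<in>\<U> n. m\<in>U})" using pp by blast
        then have "m \<in> \<Union>{U\<in>\<U> n. m\<in>U}" by blast
        then obtain U where U: "U \<in> \<U> n" "m \<in> U" by blast
        then have "openin bX U" using opn by blast
        then obtain V where V: "openin bX V" "m \<in> V" "bX closure_of V \<subseteq> U" using reg U(2) by blast
        then have "V \<in> \<V> n" using U(1) unfolding \<V>_def by blast
        moreover have "m \<in> V \<inter> M" using V(2) m by simp
        ultimately show ?thesis by blast
      next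
        case False then show ?thesis using m by auto
      qed
    qed
    obtain A' where A': "countable A'" "A' \<subseteq> ?A" "topspace (subtopology bX M) \<subseteq> \<Union>A'"
      using menger_countable_subcover[OF M(2) opA cvA] by blast
    have c1: "countable (A' - {M - bX closure_of W0})" using countable_subset[OF Diff_subset A'(1)] .
    have c2: "A' - {M - bX closure_of W0} \<subseteq> (\<lambda>V. V \<inter> M) ` \<V> n" using A'(2) by blast
    obtain V' where V': "countable V'" "V' \<subseteq> \<V> n" "A' - {M - bX closure_of W0} = (\<lambda>V. V \<inter> M) ` V'"
      using countable_subset_image[THEN iffD1, OF conjI[OF c1 c2]] by blast
    have "L \<subseteq> \<Union>V'"
    proof
      fix x assume x: "x \<in> L"
      then have "x \<in> topspace (subtopology bX M)" using LM MT by auto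
      then obtain a where "a \<in> A'" "x \<in> a" using A' by blast
      moreover have "a \<noteq> M - bX closure_of W0" using x \<open>x \<in> a\<close> L_def by auto
      ultimately have "a \<in> (\<lambda>V. V \<inter> M) ` V'" using V' by blast
      then show "x \<in> \<Union>V'" using \<open>x \<in> a\<close> by auto
    qed
    then show "\<exists>\<V>'. countable \<V>' \<and> \<V>' \<subseteq> \<V> n \<and> L \<subseteq> \<Union>\<V>'" using V' by blast
  qed
  from choice[OF this] obtain \<V>' where V'': "\<forall>n. countable (\<V>' n) \<and> \<V>' n \<subseteq> \<V> n \<and> L \<subseteq> \<Union>(\<V>' n)" by blast
  then have V': "countable (\<V>' n) \<and> \<V>' n \<subseteq> \<V> n \<and> L \<subseteq> \<Union>(\<V>' n)" for n by blast
  define D where "D = (\<lambda>V. ?T - bX closure_of V) ` (\<Union>n. \<V>' n)"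
  have "countable (\<Union>n. \<V>' n)" by (rule countable_UN) (simp_all add: V')
  then have cD: "countable D" unfolding D_def by (rule countable_image)
  have oD: "\<forall>d\<in>D. openin bX d" unfolding D_def
    using openin_diff[OF openin_topspace closedin_closure_of] by blast
  have main: "\<exists>d\<in>D. y \<in> d \<and> x \<notin> bX closure_of (d \<inter> ?Z)"
    if x: "x \<in> X \<inter> ?Z \<inter> W0" and y: "y \<in> ?T - X" for x y
  proof -
    have xL: "x \<in> L" using x W0 closure_of_subset[OF openin_subset[OF W0(1)]] L_def by auto
    have "y \<notin> (\<Inter>n. \<Union>{U\<in>\<U> n. x\<in>U})" using pp x y by blast
    then obtain n where n: "y \<notin> \<Union>{U\<in>\<U> n. x\<in>U}" by blast
    obtain V where V: "V \<in> \<V>' n" "x \<in> V" using V' xL by blast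
    then obtain U where U: "U \<in> \<U> n" "bX closure_of V \<subseteq> U" "openin bX V" using V' \<V>_def by blast
    have "x \<in> U" using U V closure_of_subset[OF openin_subset[OF U(3)]] by auto
    then have yV: "y \<notin> bX closure_of V" using n U by auto
    let ?d = "?T - bX closure_of V"
    have "?d \<in> D" using V D_def by auto
    moreover have "y \<in> ?d" using y yV by auto
    moreover have "bX closure_of (?d \<inter> ?Z) \<subseteq> ?T - V"
      using closure_of_subset[OF openin_subset[OF U(3)]]
      by (intro closure_of_minimal) (auto intro: closedin_diff U(3))
    ultimately show ?thesis using V by blast
  qed
  show ?thesis unfolding sg_def
    apply (rule exI[of _ W0], rule exI[of _ D])
    using W0 cD oD main by blast
qed


lemma ext_mem:
  assumes "Y \<subseteq> topspace bX" "openin (subtopology bX Y) V" "p \<in> V"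
  shows "p \<notin> bX closure_of (Y - V)"
proof -
  obtain V0 where V0: "openin bX V0" "V = V0 \<inter> Y" using assms(2)[unfolded openin_subtopology] by metis
  have "Y - V \<subseteq> topspace bX - V0" using V0(2) assms(1) by blast
  moreover have "closedin bX (topspace bX - V0)" using closedin_diff[OF closedin_topspace V0(1)] .
  ultimately have "bX closure_of (Y - V) \<subseteq> topspace bX - V0" by (rule closure_of_minimal)
  moreover have "p \<in> V0" using assms(3) V0(2) by simp
  ultimately show ?thesis by blast
qed

lemma ext_in:
  assumes "Y \<subseteq> topspace bX" "w \<in> Y" "w \<notin> bX closure_of (Y - V)"
  shows "w \<in> V"
  using assms closure_of_subset[of "Y - V" bX] by blast

lemma sg_transfer:
  assumes cs: "compact_space bX" and hs: "Hausdorff_space bX" and XT: "X \<subseteq> topspace bX"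
    and hm: "homeomorphic_maps (subtopology bX (topspace bX - X)) (subtopology bX (topspace bX - X)) h g"
    and y0: "y0 \<in> topspace bX - X" and sg0: "sg bX X y0"
  shows "sg bX X (h y0)"
proof -
  define T where "T = topspace bX"
  define Y where "Y = T - X"
  define Z where "Z = bX closure_of Y"
  have YT: "Y \<subseteq> T" unfolding Y_def by blast
  have tY: "topspace (subtopology bX Y) = Y" using YT unfolding T_def by auto
  note hm' = hm[unfolded homeomorphic_maps_map, folded T_def, folded Y_def]
  have hmap: "homeomorphic_map (subtopology bX Y) (subtopology bX Y) h"
    and gmap: "homeomorphic_map (subtopology bX Y) (subtopology bX Y) g"
    and gh: "\<forall>a\<in>Y. g (h a) = a" and hg: "\<forall>a\<in>Y. h (g a) = a"
    using hm' tY by auto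
  have hY: "\<forall>a\<in>Y. h a \<in> Y" using homeomorphic_imp_surjective_map[OF hmap] tY by blast
  have gY: "\<forall>a\<in>Y. g a \<in> Y" using homeomorphic_imp_surjective_map[OF gmap] tY by blast
  have hopen: "openin (subtopology bX Y) (h ` V)" if "openin (subtopology bX Y) V" for V
    using homeomorphic_imp_open_map[OF hmap] that unfolding open_map_def by blast
  have gopen: "openin (subtopology bX Y) (g ` V)" if "openin (subtopology bX Y) V" for V
    using homeomorphic_imp_open_map[OF gmap] that unfolding open_map_def by blast
  have YZ: "Y \<subseteq> Z" unfolding Z_def using closure_of_subset[of Y bX] YT T_def by blast
  have y0Y: "y0 \<in> Y" using y0 unfolding Y_def T_def .
  obtain W0 D0 where W0: "openin bX W0" "y0 \<in> W0" and cD0: "countable D0"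
    and oD0: "\<forall>d\<in>D0. openin bX d"
    and P0: "\<forall>x\<in>X \<inter> Z \<inter> W0. \<forall>y\<in>Y. \<exists>d\<in>D0. y \<in> d \<and> x \<notin> bX closure_of (d \<inter> Z)"
    using sg0 unfolding sg_def Z_def Y_def T_def by metis
  obtain W1 where W1: "openin bX W1" "y0 \<in> W1" "bX closure_of W1 \<subseteq> W0"
    using reg_nbhd[OF cs hs W0] by blast
  define N where "N = W1 \<inter> Y"
  have oN: "openin (subtopology bX Y) N" unfolding N_def using openin_subtopology_Int[OF W1(1)] .
  define N' where "N' = h ` N"
  have oN': "openin (subtopology bX Y) N'" unfolding N'_def using hopen[OF oN] .
  have yN': "h y0 \<in> N'" unfolding N'_def N_def using W1(2) y0Y by blast
  define W where "W = T - bX closure_of (Y - N')"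
  have oW: "openin bX W" unfolding W_def T_def using openin_diff[OF openin_topspace closedin_closure_of] .
  have yW: "h y0 \<in> W" unfolding W_def using ext_mem[OF _ oN' yN'] YT hY y0Y T_def by blast
  have gW: "g z \<in> W1" if "z \<in> W" "z \<in> Y" for z
  proof -
    have "z \<in> N'" using ext_in[of Y bX z N'] that YT unfolding W_def T_def by blast
    then obtain n where "n \<in> N" "z = h n" unfolding N'_def by blast
    then show ?thesis using gh N_def by simp
  qed
  define D1 where "D1 = (\<lambda>F. T \<inter> \<Inter>F) ` {F. finite F \<and> F \<subseteq> insert T D0}"
  have cD1: "countable D1" unfolding D1_def using cD0
    by (intro countable_image countable_Collect_finite_subset) simp
  have oD1: "openin bX D" if D1D: "D \<in> D1" for D
  proof -
    obtain F where F0: "D = T \<inter> \<Inter>F" "F \<in> {F. finite F \<and> F \<subseteq> insert T D0}"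
    proof -
      have "\<exists>F\<in>{F. finite F \<and> F \<subseteq> insert T D0}. D = T \<inter> \<Inter>F"
        using D1D unfolding D1_def by (simp only: image_iff)
      then show ?thesis using that by blast
    qed
    have F: "finite F" "F \<subseteq> insert T D0" "D = T \<inter> \<Inter>F" using F0 by simp_all
    have e: "D = \<Inter>(insert T F)" using F(3) by simp
    have fin: "finite (insert T F)" using F(1) by simp
    have ne: "insert T F \<noteq> {}" by simp
    have op: "openin bX S" if S: "S \<in> insert T F" for S
    proof (cases "S = T")
      case True then show ?thesis unfolding T_def by simp
    next
      case False then have "S \<in> D0" using S F(2) by blast
      then show ?thesis using oD0 by blast
    qed
    show ?thesis unfolding e by (rule openin_Inter[OF fin ne op])
  qed
  define DD where "DD = (\<lambda>D. T - bX closure_of (Y - h ` (D \<inter> Y))) ` D1"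
  have cDD: "countable DD" unfolding DD_def using cD1 by (rule countable_image)
  have oDD: "\<forall>d\<in>DD. openin bX d" unfolding DD_def T_def
    using openin_diff[OF openin_topspace closedin_closure_of] by blast
  have core: "\<exists>Ox D. openin bX Ox \<and> x \<in> Ox \<and> D \<in> D1 \<and> g y' \<in> D \<and> (\<forall>a\<in>Ox \<inter> Y. g a \<notin> D)"
    if x: "x \<in> X" "x \<in> W" and y': "y' \<in> Y" for x y'
  proof -
    have xT: "x \<in> T" using x(1) XT T_def by blast
    have gy: "g y' \<in> Y" using gY y' by blast
    have gyT: "g y' \<in> T" using gy YT by blast
    have ZT: "Z \<subseteq> T" unfolding Z_def T_def by (rule closure_of_subset_topspace)
    have pt: "\<forall>p\<in>T. \<exists>E Op D. openin bX E \<and> p \<in> E \<and> openin bX Op \<and> x \<in> Op \<and> D \<in> insert T D0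
               \<and> g y' \<in> D \<and> (\<forall>a\<in>Op \<inter> Y. g a \<in> E \<longrightarrow> g a \<notin> D)"
    proof
      fix p assume p: "p \<in> T"
      show "\<exists>E Op D. openin bX E \<and> p \<in> E \<and> openin bX Op \<and> x \<in> Op \<and> D \<in> insert T D0
               \<and> g y' \<in> D \<and> (\<forall>a\<in>Op \<inter> Y. g a \<in> E \<longrightarrow> g a \<notin> D)"
      proof (cases "p \<in> Y")
        case True
        define w where "w = h p"
        have wY: "w \<in> Y" using hY True w_def by blast
        have xw: "x \<noteq> w" using wY x(1) Y_def by blast
        have wT: "w \<in> topspace bX" using wY YT T_def by blast
        have xT': "x \<in> topspace bX" using xT T_def by blast
        obtain O1 O2 where O12: "openin bX O1" "openin bX O2" "x \<in> O1" "w \<in> O2" "disjnt O1 O2"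
          using hs[unfolded Hausdorff_space_def, rule_format, OF conjI[OF xT' conjI[OF wT xw]]] by blast
        define G where "G = g ` (O2 \<inter> Y)"
        have oG: "openin (subtopology bX Y) G" unfolding G_def
          using gopen[OF openin_subtopology_Int[OF O12(2)]] .
        obtain E where E: "openin bX E" "G = E \<inter> Y" using oG[unfolded openin_subtopology] by metis
        have "g w = p" using gh True w_def by simp
        then have pG: "p \<in> G" unfolding G_def using O12(4) wY by blast
        then have pE: "p \<in> E" using E(2) by blast
        have noE: "g a \<notin> E" if a: "a \<in> O1 \<inter> Y" for a
        proof
          assume gaE: "g a \<in> E"
          have "g a \<in> Y" using gY a by blast
          then have "g a \<in> G" using gaE E(2) by blast
          then obtain b where b: "b \<in> O2 \<inter> Y" "g a = g b" unfolding G_def by blast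
          have "a = h (g a)" using hg a by simp
          also have "\<dots> = h (g b)" using b(2) by simp
          also have "\<dots> = b" using hg b(1) by simp
          finally have "a = b" .
          then show False using a b(1) O12(5) unfolding disjnt_def by blast
        qed
        have TT: "T \<in> insert T D0" by simp
        show ?thesis
          apply (rule exI[of _ E], rule exI[of _ O1], rule exI[of _ T])
          using E(1) pE O12(1) O12(3) TT gyT noE by blast
      next
        case False
        then have pX: "p \<in> X" using p Y_def by blast
        show ?thesis
        proof (cases "p \<in> Z")
          case False
          have oE: "openin bX (T - Z)" unfolding T_def Z_def
            using openin_diff[OF openin_topspace closedin_closure_of] .
          have pE: "p \<in> T - Z" using p False by blast
          have noE: "g a \<notin> T - Z" if a: "a \<in> T \<inter> Y" for a
            using gY a YZ by blast
          have TT: "T \<in> insert T D0" by simp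
          have oT: "openin bX T" unfolding T_def by simp
          show ?thesis
            apply (rule exI[of _ "T - Z"], rule exI[of _ T], rule exI[of _ T])
            using oE pE oT xT TT gyT noE by blast
        next
          case pZ: True
          show ?thesis
          proof (cases "p \<in> W0")
            case True
            then have "p \<in> X \<inter> Z \<inter> W0" using pX pZ by blast
            then obtain d where d: "d \<in> D0" "g y' \<in> d" "p \<notin> bX closure_of (d \<inter> Z)"
              using P0 gy by blast
            have oE: "openin bX (T - bX closure_of (d \<inter> Z))" unfolding T_def
              using openin_diff[OF openin_topspace closedin_closure_of] .
            have pE: "p \<in> T - bX closure_of (d \<inter> Z)" using p d(3) by blast
            have dT: "d \<subseteq> T" using oD0 d(1) openin_subset T_def by blast
            have noE: "g a \<notin> d" if a: "a \<in> T \<inter> Y" "g a \<in> T - bX closure_of (d \<inter> Z)" for a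
            proof
              assume "g a \<in> d"
              moreover have "g a \<in> Z" using gY a(1) YZ by blast
              ultimately have "g a \<in> bX closure_of (d \<inter> Z)"
                using closure_of_subset[of "d \<inter> Z" bX] dT T_def by blast
              then show False using a(2) by blast
            qed
            have dD: "d \<in> insert T D0" using d(1) by simp
            have oT: "openin bX T" unfolding T_def by simp
            show ?thesis
              apply (rule exI[of _ "T - bX closure_of (d \<inter> Z)"], rule exI[of _ T], rule exI[of _ d])
              using oE pE oT xT dD d(2) noE by blast
          next
            case False
            have oE: "openin bX (T - bX closure_of W1)" unfolding T_def
              using openin_diff[OF openin_topspace closedin_closure_of] .
            have pE: "p \<in> T - bX closure_of W1" using p False W1(3) by blast
            have W1T: "W1 \<subseteq> topspace bX" using openin_subset[OF W1(1)] .
            have noE: "g a \<notin> T - bX closure_of W1" if a: "a \<in> W \<inter> Y" for a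
            proof -
              have "g a \<in> W1" using gW a by blast
              then show ?thesis using closure_of_subset[OF W1T] by blast
            qed
            have TT: "T \<in> insert T D0" by simp
            show ?thesis
              apply (rule exI[of _ "T - bX closure_of W1"], rule exI[of _ W], rule exI[of _ T])
              using oE pE oW x(2) TT gyT noE by blast
          qed
        qed
      qed
    qed
    then obtain Ef where "\<forall>p\<in>T. \<exists>Op D. openin bX (Ef p) \<and> p \<in> Ef p \<and> openin bX Op \<and> x \<in> Op \<and> D \<in> insert T D0
               \<and> g y' \<in> D \<and> (\<forall>a\<in>Op \<inter> Y. g a \<in> Ef p \<longrightarrow> g a \<notin> D)"
      by (rule bchoice[THEN exE])
    then obtain Of where "\<forall>p\<in>T. \<exists>D. openin bX (Ef p) \<and> p \<in> Ef p \<and> openin bX (Of p) \<and> x \<in> Of p \<and> D \<in> insert T D0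
               \<and> g y' \<in> D \<and> (\<forall>a\<in>Of p \<inter> Y. g a \<in> Ef p \<longrightarrow> g a \<notin> D)"
      by (rule bchoice[THEN exE])
    then obtain Df where EOD: "\<forall>p\<in>T. openin bX (Ef p) \<and> p \<in> Ef p \<and> openin bX (Of p) \<and> x \<in> Of p \<and> Df p \<in> insert T D0
               \<and> g y' \<in> Df p \<and> (\<forall>a\<in>Of p \<inter> Y. g a \<in> Ef p \<longrightarrow> g a \<notin> Df p)"
      by (rule bchoice[THEN exE])
    have opc: "\<forall>U\<in>Ef ` T. openin bX U" using EOD by blast
    have cov: "topspace bX \<subseteq> \<Union>(Ef ` T)" using EOD T_def by blast
    obtain F where F: "finite F" "F \<subseteq> Ef ` T" "topspace bX \<subseteq> \<Union>F"
      using cs[unfolded compact_space_alt, rule_format, OF conjI[OF opc cov]] by blast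
    obtain P where P: "P \<subseteq> T" "finite P" "F = Ef ` P"
      using finite_subset_image[OF F(1) F(2)] by blast
    define Ox where "Ox = \<Inter>(insert T (Of ` P))"
    have oOx: "openin bX Ox" unfolding Ox_def
    proof (rule openin_Inter)
      show "finite (insert T (Of ` P))" using P(2) by simp
      show "insert T (Of ` P) \<noteq> {}" by simp
      show "openin bX S" if "S \<in> insert T (Of ` P)" for S
        using that EOD P(1) T_def by auto
    qed
    have xOx: "x \<in> Ox" unfolding Ox_def using xT EOD P(1) by blast
    define D where "D = T \<inter> \<Inter>(Df ` P)"
    have "Df ` P \<in> {F. finite F \<and> F \<subseteq> insert T D0}" using P EOD by blast
    then have DD1: "D \<in> D1" unfolding D_def D1_def by (rule imageI)
    have gyD: "g y' \<in> D" unfolding D_def using gyT EOD P(1) by blast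
    have disj: "\<forall>a\<in>Ox \<inter> Y. g a \<notin> D"
    proof
      fix a assume a: "a \<in> Ox \<inter> Y"
      show "g a \<notin> D"
      proof
        assume gaD: "g a \<in> D"
        then have "g a \<in> topspace bX" unfolding D_def T_def by blast
        then obtain p where pP: "p \<in> P" "g a \<in> Ef p" using F(3) P(3) by blast
        have pT: "p \<in> T" using pP(1) P(1) by blast
        have aO: "a \<in> Of p \<inter> Y" using a pP(1) unfolding Ox_def by blast
        have "g a \<in> Df p" using gaD pP(1) unfolding D_def by blast
        then show False using EOD pT aO pP(2) by blast
      qed
    qed
    show ?thesis using oOx xOx DD1 gyD disj by blast
  qed
  have main: "\<exists>d\<in>DD. y' \<in> d \<and> x \<notin> bX closure_of (d \<inter> Z)"
    if x: "x \<in> X" "x \<in> W" and y': "y' \<in> Y" for x y'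
  proof -
    obtain Ox D where Ox: "openin bX Ox" "x \<in> Ox" and D: "D \<in> D1" "g y' \<in> D"
      and disj: "\<forall>a\<in>Ox \<inter> Y. g a \<notin> D"
      using core[OF x y'] by blast
    define V where "V = h ` (D \<inter> Y)"
    have oV: "openin (subtopology bX Y) V" unfolding V_def
      using hopen[OF openin_subtopology_Int[OF oD1[OF D(1)], of Y]] .
    have yV: "y' \<in> V" unfolding V_def using D(2) gY hg y' by (metis IntI image_eqI)
    define d where "d = T - bX closure_of (Y - V)"
    have dDD: "d \<in> DD" unfolding d_def DD_def V_def using D(1) by blast
    have yd: "y' \<in> d" unfolding d_def using ext_mem[OF _ oV yV] YT y' T_def by blast
    have "x \<notin> bX closure_of (d \<inter> Z)"
    proof
      assume "x \<in> bX closure_of (d \<inter> Z)"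
      then obtain q where q: "q \<in> d \<inter> Z" "q \<in> Ox"
        using Ox unfolding in_closure_of by blast
      have od: "openin bX d" unfolding d_def T_def using openin_diff[OF openin_topspace closedin_closure_of] .
      have "q \<in> bX closure_of Y" using q Z_def by blast
      then obtain w where w: "w \<in> Y" "w \<in> Ox \<inter> d"
        using openin_Int[OF Ox(1) od] q unfolding in_closure_of by blast
      have "w \<in> V" using ext_in[of Y bX w V] w YT unfolding d_def T_def by blast
      then obtain e where e: "e \<in> D \<inter> Y" "w = h e" unfolding V_def by blast
      then have "g w = e" using gh by simp
      then have "g w \<in> D" using e by simp
      moreover have "g w \<notin> D" using disj w by blast
      ultimately show False by simp
    qed
    then show ?thesis using dDD yd by blast
  qed
  show ?thesis unfolding sg_def
    apply (rule exI[of _ W], rule exI[of _ DD])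
    using oW yW cDD oDD main unfolding T_def Y_def Z_def by blast
qed


theorem theorem5p3:
  fixes bX :: "'a topology" and X :: "'a set"
  assumes "compactification_of bX X"
    and "tychonoff_space (subtopology bX X)"
    and "locally_menger (subtopology bX X)"
    and "p_space_in bX X"
    and "homogeneous_space (subtopology bX (topspace bX - X))"
  shows "s_space_in (subtopology bX (bX closure_of (topspace bX - X))) (topspace bX - X)"
proof -
  have cs: "compact_space bX" and hs: "Hausdorff_space bX" and XT: "X \<subseteq> topspace bX"
    using assms(1) unfolding compactification_of_def by blast+
  define T where "T = topspace bX"
  define Y where "Y = T - X"
  define Z where "Z = bX closure_of Y"
  have YT: "Y \<subseteq> T" unfolding Y_def by blast
  have tY: "topspace (subtopology bX Y) = Y" using YT unfolding T_def by auto
  have YZ: "Y \<subseteq> Z" unfolding Z_def using closure_of_subset[of Y bX] YT T_def by blast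
  have ZT: "Z \<subseteq> T" unfolding Z_def T_def by (rule closure_of_subset_topspace)
  have sgX: "sg bX X x" if "x \<in> X" for x
    using sg_X[OF cs hs XT assms(3) assms(4) that] .
  have sgY: "sg bX X z" if z: "z \<in> Y" for z
  proof (cases "X \<inter> Z = {}")
    case True
    have oT: "openin bX T" unfolding T_def by simp
    have zT: "z \<in> T" using z YT by blast
    show ?thesis unfolding sg_def
      apply (rule exI[of _ T], rule exI[of _ "{}"])
      using oT zT True unfolding Z_def Y_def T_def by blast
  next
    case False
    then obtain x0 where x0: "x0 \<in> X" "x0 \<in> Z" by blast
    obtain W0 D0 where W0: "openin bX W0" "x0 \<in> W0" and rest: "countable D0" "\<forall>d\<in>D0. openin bX d"
      "\<forall>x\<in>X \<inter> bX closure_of (topspace bX - X) \<inter> W0. \<forall>y\<in>topspace bX - X. \<exists>d\<in>D0. y \<in> d \<and>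
        x \<notin> bX closure_of (d \<inter> bX closure_of (topspace bX - X))"
      using sgX[OF x0(1)] unfolding sg_def by metis
    obtain y0 where y0: "y0 \<in> Y" "y0 \<in> W0"
      using x0(2) W0 unfolding Z_def in_closure_of by blast
    have sg0: "sg bX X y0" unfolding sg_def
      apply (rule exI[of _ W0], rule exI[of _ D0])
      using W0(1) y0(2) rest by blast
    have "\<exists>h. homeomorphic_map (subtopology bX Y) (subtopology bX Y) h \<and> h y0 = z"
      using assms(5)[unfolded homogeneous_space_def, folded T_def, folded Y_def, unfolded tY] y0(1) z
      by blast
    then obtain h where h: "homeomorphic_map (subtopology bX Y) (subtopology bX Y) h" "h y0 = z"
      by blast
    then obtain g where hg: "homeomorphic_maps (subtopology bX Y) (subtopology bX Y) h g"
      unfolding homeomorphic_map_maps by blast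
    have "sg bX X (h y0)"
      using sg_transfer[OF cs hs XT hg[unfolded Y_def T_def] y0(1)[unfolded Y_def T_def] sg0] .
    then show ?thesis using h(2) by simp
  qed
  have sgZ: "\<forall>z\<in>Z. \<exists>W D. openin bX W \<and> z \<in> W \<and> countable D \<and> (\<forall>d\<in>D. openin bX d) \<and>
     (\<forall>x\<in>X \<inter> Z \<inter> W. \<forall>y\<in>Y. \<exists>d\<in>D. y \<in> d \<and> x \<notin> bX closure_of (d \<inter> Z))"
  proof
    fix z assume z: "z \<in> Z"
    have "sg bX X z"
    proof (cases "z \<in> X")
      case True then show ?thesis using sgX by blast
    next
      case False then have "z \<in> Y" using z ZT Y_def by blast
      then show ?thesis using sgY by blast
    qed
    then show "\<exists>W D. openin bX W \<and> z \<in> W \<and> countable D \<and> (\<forall>d\<in>D. openin bX d) \<and>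
     (\<forall>x\<in>X \<inter> Z \<inter> W. \<forall>y\<in>Y. \<exists>d\<in>D. y \<in> d \<and> x \<notin> bX closure_of (d \<inter> Z))"
      unfolding sg_def Z_def Y_def T_def .
  qed
  then obtain Wf where "\<forall>z\<in>Z. \<exists>D. openin bX (Wf z) \<and> z \<in> Wf z \<and> countable D \<and> (\<forall>d\<in>D. openin bX d) \<and>
     (\<forall>x\<in>X \<inter> Z \<inter> Wf z. \<forall>y\<in>Y. \<exists>d\<in>D. y \<in> d \<and> x \<notin> bX closure_of (d \<inter> Z))"
    by (rule bchoice[THEN exE])
  then obtain Df where WD: "\<forall>z\<in>Z. openin bX (Wf z) \<and> z \<in> Wf z \<and> countable (Df z) \<and> (\<forall>d\<in>Df z. openin bX d) \<and>
     (\<forall>x\<in>X \<inter> Z \<inter> Wf z. \<forall>y\<in>Y. \<exists>d\<in>Df z. y \<in> d \<and> x \<notin> bX closure_of (d \<inter> Z))"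
    by (rule bchoice[THEN exE])
  have cZ: "compactin bX Z" unfolding Z_def using closedin_compact_space[OF cs closedin_closure_of] .
  have opc: "\<forall>U\<in>Wf ` Z. openin bX U" using WD by blast
  have cov: "Z \<subseteq> \<Union>(Wf ` Z)" using WD by blast
  obtain F where F: "finite F" "F \<subseteq> Wf ` Z" "Z \<subseteq> \<Union>F"
    using cZ[unfolded compactin_def] opc cov by blast
  obtain Q where Q: "Q \<subseteq> Z" "finite Q" "F = Wf ` Q"
    using finite_subset_image[OF F(1) F(2)] by blast
  define C where "C = insert Z ((\<lambda>d. d \<inter> Z) ` (\<Union>q\<in>Q. Df q))"
  have "countable (\<Union>q\<in>Q. Df q)"
  proof (rule countable_UN)
    show "countable Q" using Q(2) by (rule countable_finite)
    show "countable (Df q)" if "q \<in> Q" for q using that Q(1) WD by blast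
  qed
  then have cC: "countable C" unfolding C_def by simp
  have tZ: "topspace (subtopology bX Z) = Z" using ZT unfolding T_def by auto
  have oC: "\<forall>c\<in>C. openin (subtopology bX Z) c"
  proof
    fix c assume "c \<in> C"
    then consider "c = Z" | d where "d \<in> (\<Union>q\<in>Q. Df q)" "c = d \<inter> Z" unfolding C_def by blast
    then show "openin (subtopology bX Z) c"
    proof cases
      case 1 then show ?thesis using openin_topspace[of "subtopology bX Z"] tZ by simp
    next
      case 2
      then obtain q where "q \<in> Q" "d \<in> Df q" by blast
      then have "openin bX d" using WD Q(1) by blast
      then show ?thesis using 2(2) openin_subtopology_Int by metis
    qed
  qed
  define G where "G = (\<lambda>y. \<Inter>{c\<in>C. y \<in> c}) ` Y"
  have Gd: "G \<subseteq> delta_family C"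
  proof
    fix S assume "S \<in> G"
    then obtain y where y: "y \<in> Y" "S = \<Inter>{c\<in>C. y \<in> c}" unfolding G_def by blast
    have "Z \<in> {c\<in>C. y \<in> c}" using y(1) YZ C_def by blast
    then have "{c\<in>C. y \<in> c} \<subseteq> C \<and> {c\<in>C. y \<in> c} \<noteq> {}" by blast
    then show "S \<in> delta_family C" unfolding delta_family_def using y(2) by blast
  qed
  have YG: "Y = \<Union>G"
  proof
    show "Y \<subseteq> \<Union>G" unfolding G_def by blast
    show "\<Union>G \<subseteq> Y"
    proof
      fix z assume "z \<in> \<Union>G"
      then obtain y where y: "y \<in> Y" "z \<in> \<Inter>{c\<in>C. y \<in> c}" unfolding G_def by blast
      have ZC: "Z \<in> {c\<in>C. y \<in> c}" using y(1) YZ C_def by blast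
      then have zZ: "z \<in> Z" using y(2) by blast
      show "z \<in> Y"
      proof (rule ccontr)
        assume "z \<notin> Y"
        then have zX: "z \<in> X" using zZ ZT Y_def by blast
        obtain q where q: "q \<in> Q" "z \<in> Wf q" using F(3) Q(3) zZ by blast
        have "q \<in> Z" using q(1) Q(1) by blast
        then have "\<forall>x\<in>X \<inter> Z \<inter> Wf q. \<forall>y\<in>Y. \<exists>d\<in>Df q. y \<in> d \<and> x \<notin> bX closure_of (d \<inter> Z)"
          using WD by blast
        then obtain d where d: "d \<in> Df q" "y \<in> d" "z \<notin> bX closure_of (d \<inter> Z)"
          using zX zZ q(2) y(1) by blast
        have "d \<inter> Z \<subseteq> topspace bX" using ZT T_def by blast
        then have znd: "z \<notin> d \<inter> Z" using d(3) closure_of_subset by blast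
        have "d \<inter> Z \<in> {c\<in>C. y \<in> c}" using d(1,2) q(1) y(1) YZ unfolding C_def by blast
        then have "z \<in> d \<inter> Z" using y(2) by blast
        then show False using znd by blast
      qed
    qed
  qed
  have "Y \<in> delta_sigma_family C" unfolding delta_sigma_family_def using Gd YG by blast
  then show ?thesis unfolding s_space_in_def is_source_def
    using cC oC unfolding Z_def Y_def T_def by blast
qed

end
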